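(* Let $n\ge 3$ and consider the Markov chain on $\{0,1,\dots,n-1\}$ with $n\times n$ transition probability matrix $\mathbf P=(P_{ij})$ given by: $P_{00}=5/6$, $P_{01}=1/6$; $P_{10}=5/6$, $P_{12}=1/6$; for $2\le i\le n-2$: $P_{i0}=2/3$, $P_{i,i-1}=1/6$, $P_{i,i+1}=1/6$; $P_{n-1,0}=1/3$, $P_{n-1,n-2}=1/6$, $P_{n-1,n-1}=1/2$; all other entries $0$. Then the steady state probability vector $\vec\pi=(\pi_0,\dots,\pi_{n-1})$ (the unique probability vector with $\vec\pi=\vec\pi\mathbf P$) is given by $$\pi_i=\frac{C_{n-1-i}}{\sum_{l=0}^{n-1}C_l},\qquad i=0,1,\dots,n-1.$$
   Context: The Lucas-balancing numbers $C_m$ are defined by $C_0=1$, $C_1=3$, $C_{m+1}=6C_m-C_{m-1}$ (equivalently $C_m=\sqrt{8B_m^2+1}$ where $B_m$ are the balancing numbers $B_0=0,B_1=1,B_{m+1}=6B_m-B_{m-1}$). *)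

theory Defs
  imports Complex_Main
begin

fun lucas_bal :: "nat \<Rightarrow> int" where
  "lucas_bal 0 = 1"
| "lucas_bal (Suc 0) = 3"
| "lucas_bal (Suc (Suc m)) = 6 * lucas_bal (Suc m) - lucas_bal m"

definition trans_P :: "nat \<Rightarrow> nat \<Rightarrow> nat \<Rightarrow> real" where
  "trans_P n i j =
    (if i \<ge> n \<or> j \<ge> n then 0
     else if i = 0 then (if j = 0 then 5/6 else if j = 1 then 1/6 else 0)
     else if i = 1 then (if j = 0 then 5/6 else if j = 2 then 1/6 else 0)
     else if i \<le> n - 2 then
       (if j = 0 then 2/3 else if j = i - 1 then 1/6 else if j = i + 1 then 1/6 else 0)
     else (if j = 0 then 1/3 else if j = n - 2 then 1/6 else if j = n - 1 then 1/2 else 0))"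

definition stationary_prob :: "nat \<Rightarrow> (nat \<Rightarrow> real) \<Rightarrow> bool" where
  "stationary_prob n p \<longleftrightarrow>
     (\<forall>i<n. p i \<ge> 0) \<and> (\<Sum>i<n. p i) = 1 \<and>
     (\<forall>j<n. p j = (\<Sum>i<n. p i * trans_P n i j))"

end

theory Submission
  imports Defs
begin
lemma rows:
  assumes "n \<ge> 3" "i < (n::nat)"
  obtains "i = 0" | "i = 1" | "2 \<le> i" "i \<le> n-2" | "i = n-1" "n - 1 > n - 2"
  using assms by linarith

lemma tA: "n \<ge> 3 \<Longrightarrow> 1 \<le> j \<Longrightarrow> j \<le> n - 2 \<Longrightarrow> i < n \<Longrightarrow> trans_P n i j =
     (if i = j-1 then 1/6 else 0) + (if i = j+1 then 1/6 else 0)"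
  apply (rule rows[of n i], assumption, assumption)
  apply (simp_all add: trans_P_def)
  apply presburger+
  done
lemma tB: "n \<ge> 3 \<Longrightarrow> i < n \<Longrightarrow> trans_P n i (n-1) =
     (if i = n-2 then 1/6 else 0) + (if i = n-1 then 1/2 else 0)"
  apply (rule rows[of n i], assumption, assumption)
  apply (simp_all add: trans_P_def)
  apply presburger+
  done
lemma tC: "n \<ge> 3 \<Longrightarrow> i < n \<Longrightarrow> trans_P n i 0 =
     2/3 + (if i = 0 then 1/6 else 0) + (if i = 1 then 1/6 else 0) - (if i = n-1 then 1/3 else 0)"
  apply (rule rows[of n i], assumption, assumption)
  apply (simp_all add: trans_P_def)
  apply presburger+
  done
lemma lb_pos: "lucas_bal m \<ge> 1 \<and> lucas_bal m \<le> lucas_bal (Suc m)"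
  by (induction m rule: lucas_bal.induct) auto

lemma lb_sum: "4 * (\<Sum>l<Suc (Suc m). lucas_bal l) = 5 * lucas_bal (Suc m) - lucas_bal m + 2"
proof (induction m)
  case 0 then show ?case by (simp add: numeral_eq_Suc)
next
  case (Suc m)
  have "(\<Sum>l<Suc (Suc (Suc m)). lucas_bal l) = (\<Sum>l<Suc (Suc m). lucas_bal l) + lucas_bal (Suc (Suc m))"
    by (rule sum.lessThan_Suc)
  with Suc show ?case by simp
qed

lemma colA:
  assumes "n \<ge> 3" "1 \<le> j" "j \<le> n - 2"
  shows "(\<Sum>i<n. p i * trans_P n i j) = p (j-1)/6 + p (j+1)/6"
proof -
  have "(\<Sum>i<n. p i * trans_P n i j) = (\<Sum>i<n. (if i = j-1 then p i/6 else 0) + (if i = j+1 then p i/6 else 0))"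
  proof (rule sum.cong[OF refl])
    fix i assume "i \<in> {..<n}"
    then have "i < n" by simp
    then show "p i * trans_P n i j = (if i = j-1 then p i/6 else 0) + (if i = j+1 then p i/6 else 0)"
      by (subst tA[OF assms \<open>i < n\<close>]) (simp add: distrib_left)
  qed
  also have "\<dots> = p (j-1)/6 + p (j+1)/6"
  proof -
    have "j - 1 < n" "j + 1 < n" using assms by arith+
    then show ?thesis by (simp add: sum.distrib)
  qed
  finally show ?thesis .
qed

lemma colB:
  assumes "n \<ge> 3"
  shows "(\<Sum>i<n. p i * trans_P n i (n-1)) = p (n-2)/6 + p (n-1)/2"
proof -
  have "(\<Sum>i<n. p i * trans_P n i (n-1)) = (\<Sum>i<n. (if i = n-2 then p i/6 else 0) + (if i = n-1 then p i/2 else 0))"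
  proof (rule sum.cong[OF refl])
    fix i assume "i \<in> {..<n}"
    then have "i < n" by simp
    then show "p i * trans_P n i (n-1) = (if i = n-2 then p i/6 else 0) + (if i = n-1 then p i/2 else 0)"
      by (subst tB[OF assms \<open>i < n\<close>]) (simp add: distrib_left)
  qed
  also have "\<dots> = p (n-2)/6 + p (n-1)/2"
  proof -
    have "n - 2 < n" "n - 1 < n" using assms by arith+
    then show ?thesis by (simp add: sum.distrib)
  qed
  finally show ?thesis .
qed

lemma colC:
  assumes "n \<ge> 3"
  shows "(\<Sum>i<n. p i * trans_P n i 0) = 2/3 * (\<Sum>i<n. p i) + p 0/6 + p 1/6 - p (n-1)/3"
proof -
  have "(\<Sum>i<n. p i * trans_P n i 0) = (\<Sum>i<n. 2/3 * p i + (if i = 0 then p i/6 else 0) + (if i = 1 then p i/6 else 0) - (if i = n-1 then p i/3 else 0))"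
  proof (rule sum.cong[OF refl])
    fix i assume "i \<in> {..<n}"
    then have "i < n" by simp
    then show "p i * trans_P n i 0 = 2/3 * p i + (if i = 0 then p i/6 else 0) + (if i = 1 then p i/6 else 0) - (if i = n-1 then p i/3 else 0)"
      using assms by (subst tC[OF assms \<open>i < n\<close>]) (simp add: algebra_simps)
  qed
  also have "\<dots> = 2/3 * (\<Sum>i<n. p i) + p 0/6 + p 1/6 - p (n-1)/3"
  proof -
    have "n - 1 < n" "1 < n" "0 < n" using assms by arith+
    then show ?thesis by (simp add: sum.distrib sum_subtractf sum_distrib_left)
  qed
  finally show ?thesis .
qed

theorem theorem3p1:
  fixes n :: nat
  assumes "n \<ge> 3"
  shows "\<forall>p. stationary_prob n p \<longleftrightarrow>
           (\<forall>i<n. p i = real_of_int (lucas_bal (n - 1 - i)) / (\<Sum>l<n. real_of_int (lucas_bal l)))"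
proof (rule allI, rule iffI)
  define C where "C k = real_of_int (lucas_bal k)" for k
  define T where "T = (\<Sum>l<n. C l)"
  have Cpos: "C k \<ge> 1" for k using lb_pos[of k] by (simp add: C_def)
  have Crec: "C (Suc (Suc m)) = 6 * C (Suc m) - C m" for m by (simp add: C_def)
  have "T \<ge> C 0" unfolding T_def
    using assms by (intro member_le_sum) (auto intro: order_trans[OF zero_le_one Cpos])
  then have Tpos: "T > 0" using Cpos[of 0] by linarith
  have Tsum: "4 * T = 5 * C (n-1) - C (n-2) + 2"
  proof -
    have "n = Suc (Suc (n-2))" "n - 1 = Suc (n-2)" using assms by arith+
    then have "4 * (\<Sum>l<n. lucas_bal l) = 5 * lucas_bal (n-1) - lucas_bal (n-2) + 2"
      using lb_sum[of "n-2"] by metis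
    then have "real_of_int (4 * (\<Sum>l<n. lucas_bal l)) = real_of_int (5 * lucas_bal (n-1) - lucas_bal (n-2) + 2)"
      by simp
    then show ?thesis by (simp add: T_def C_def)
  qed
  have reidx: "(\<Sum>i<n. f i) = (\<Sum>k<n. f (n - 1 - k))" for f :: "nat \<Rightarrow> real"
    using sum.nat_diff_reindex[of f n] by simp
  {
    fix p assume st: "stationary_prob n p"
    have eq: "p j = (\<Sum>i<n. p i * trans_P n i j)" if "j < n" for j
      using st that unfolding stationary_prob_def by blast
    have main: "k < n \<Longrightarrow> p (n - 1 - k) = p (n - 1) * C k" for k
    proof (induction k rule: less_induct)
      case (less k)
      show ?case
      proof (cases k)
        case 0 then show ?thesis by (simp add: C_def)
      next
        case (Suc k')
        show ?thesis
        proof (cases k')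
          case 0
          have "p (n-1) = (\<Sum>i<n. p i * trans_P n i (n-1))" by (rule eq) (use assms in arith)
          then have "p (n-1) = p (n-2)/6 + p (n-1)/2" by (simp only: colB[OF assms])
          moreover have "n - 1 - k = n - 2" using Suc 0 by simp
          moreover have "C k = 3" using Suc 0 by (simp add: C_def)
          ultimately show ?thesis by simp
        next
          case (Suc m)
          define j where "j = n - 2 - m"
          have j: "1 \<le> j" "j \<le> n - 2" "j < n" "j - 1 = n - 1 - k" "j + 1 = n - 1 - m"
            "j = n - 1 - Suc m"
            using less.prems \<open>k = Suc k'\<close> Suc unfolding j_def by arith+
          have "p j = p (j-1)/6 + p (j+1)/6"
            using eq[OF j(3)] by (simp only: colA[OF assms j(1,2)])
          moreover have "p j = p (n-1) * C (Suc m)"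
            using less.IH[of "Suc m"] less.prems \<open>k = Suc k'\<close> Suc j(6) by simp
          moreover have "p (j+1) = p (n-1) * C m"
            using less.IH[of m] less.prems \<open>k = Suc k'\<close> Suc j(5) by simp
          ultimately have "p (n - 1 - k) = p (n-1) * (6 * C (Suc m) - C m)"
            using j(4) by (simp add: algebra_simps)
          then show ?thesis using Crec[of m] \<open>k = Suc k'\<close> Suc by simp
        qed
      qed
    qed
    have "(\<Sum>i<n. p i) = 1" using st unfolding stationary_prob_def by blast
    then have "1 = (\<Sum>i<n. p i)" by (rule sym)
    also have "\<dots> = (\<Sum>k<n. p (n - 1 - k))" by (rule reidx)
    also have "\<dots> = (\<Sum>k<n. p (n - 1) * C k)" by (intro sum.cong refl main) simp
    also have "\<dots> = p (n-1) * T" by (simp add: T_def sum_distrib_left)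
    finally have c: "p (n-1) = 1 / T" using Tpos by (simp add: field_simps)
    show "\<forall>i<n. p i = real_of_int (lucas_bal (n - 1 - i)) / (\<Sum>l<n. real_of_int (lucas_bal l))"
    proof (intro allI impI)
      fix i assume "i < n"
      then have "p i = p (n - 1 - (n - 1 - i))" by simp
      also have "\<dots> = p (n-1) * C (n - 1 - i)" using main[of "n-1-i"] \<open>i<n\<close> by simp
      finally show "p i = real_of_int (lucas_bal (n - 1 - i)) / (\<Sum>l<n. real_of_int (lucas_bal l))"
        using c by (simp add: C_def T_def)
    qed
  }
  {
    fix p assume h: "\<forall>i<n. p i = real_of_int (lucas_bal (n - 1 - i)) / (\<Sum>l<n. real_of_int (lucas_bal l))"
    then have pv: "p i = C (n - 1 - i) / T" if "i < n" for i using that by (simp add: C_def T_def)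
    have nn: "\<forall>i<n. p i \<ge> 0"
      using pv Tpos Cpos by (smt (verit) divide_nonneg_pos)
    have "(\<Sum>i<n. p i) = (\<Sum>i<n. C (n - 1 - i) / T)" using pv by simp
    also have "\<dots> = (\<Sum>k<n. C (n - 1 - (n - 1 - k)) / T)" by (rule reidx)
    also have "\<dots> = (\<Sum>k<n. C k / T)" by (intro sum.cong) auto
    also have "\<dots> = 1" using Tpos by (simp add: T_def sum_divide_distrib[symmetric])
    finally have s1: "(\<Sum>i<n. p i) = 1" .
    have bal: "p j = (\<Sum>i<n. p i * trans_P n i j)" if jn: "j < n" for j
    proof -
      consider "j = 0" | "1 \<le> j" "j \<le> n - 2" | "j = n - 1" using jn by linarith
      then show ?thesis
      proof cases
        case 1
        have a: "p 0 = C (n-1) / T" "p 1 = C (n-2) / T" "p (n-1) = C 0 / T"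
          using pv[of 0] pv[of 1] pv[of "n-1"] assms by (simp_all add: numeral_2_eq_2)
        have "C 0 = 1" by (simp add: C_def)
        then have "T * (5 * p 0) = T * (4 + p 1 - 2 * p (n-1))"
          using a Tsum Tpos by (simp add: field_simps)
        then have b: "5 * p 0 = 4 + p 1 - 2 * p (n-1)" using Tpos by simp
        have "(\<Sum>i<n. p i * trans_P n i 0) = 2/3 + p 0/6 + p 1/6 - p (n-1)/3"
          using colC[OF assms, of p] s1 by simp
        then show ?thesis using b 1 by simp
      next
        case 2
        define m where "m = n - 2 - j"
        have idx: "n - 1 - j = Suc m" "n - 1 - (j - 1) = Suc (Suc m)" "n - 1 - (j+1) = m"
          "j - 1 < n" "j + 1 < n" "n - j = Suc (Suc m)"
          using 2 assms unfolding m_def by arith+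
        have "p j = C (Suc m) / T" "p (j-1) = C (Suc (Suc m)) / T" "p (j+1) = C m / T"
          using pv[of j] pv[of "j-1"] pv[of "j+1"] idx jn by simp_all
        then have "T * (6 * p j) = T * (p (j-1) + p (j+1))"
          using Crec[of m] Tpos by (simp add: field_simps)
        then have "6 * p j = p (j-1) + p (j+1)" using Tpos by simp
        then show ?thesis using colA[OF assms 2, of p] by simp
      next
        case 3
        have "p (n-1) = C 0 / T" "p (n-2) = C 1 / T"
          using pv[of "n-1"] pv[of "n-2"] assms by (simp_all add: numeral_2_eq_2)
        moreover have "C 0 = 1" "C 1 = 3" by (simp_all add: C_def)
        ultimately have "T * p (n-2) = T * (3 * p (n-1))"
          using Tpos by (simp add: field_simps)
        then have "p (n-2) = 3 * p (n-1)" using Tpos by simp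
        then show ?thesis using colB[OF assms, of p] 3 by simp
      qed
    qed
    show "stationary_prob n p" unfolding stationary_prob_def using nn s1 bal by blast
  }
qed

end
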